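(* Let $(u_k)_{k\ge1}$ be defined by $u_k=k$ for $k\in\{1,2,3\}$ and $u_k=2u_{k-2}$ for $k\ge4$. For $k\ge1$, let $\omega_k$ be the largest integer such that every error $\mathbf{e}\in\mathbb{F}_2^{E_k}$ of Hamming weight at most $\omega_k$ is decoded correctly by the renormalisation decoder on $\mathbf{T}_k$. Then $\omega_k\le u_k-1$ for all $k\ge1$.
   Context: Toric code and decoding. Fix $k\ge1$. Let $\mathbf{T}_k=(V_k,E_k)$ be the Cayley graph of $\mathbb{Z}/2^k\mathbb{Z}\times\mathbb{Z}/2^k\mathbb{Z}$ with generators $(\pm1,0),(0,\pm1)$. An error is $\mathbf{e}\in\mathbb{F}_2^{E_k}$; its syndrome $\sigma(\mathbf{e})$ is the set of vertices incident to an odd number of edges of $\mathbf{e}$. The decoder outputs $\hat{\mathbf{e}}$ with $\sigma(\hat{\mathbf{e}})=\sigma(\mathbf{e})$; $\mathbf{e}$ is decoded correctly if $\mathbf{e}+\hat{\mathbf{e}}$ is a sum (mod 2) of faces (unit 4-cycles) of $\mathbf{T}_k$. Subtilings. For $0\le i\le k$ let $h_i=2^{k-i}$, $V_i$ the subgroup generated by $(h_i,0),(0,h_i)$, and $\mathbf{T}_i$ the graph on $V_i$ joining vertices differing by $\pm h_i$ in exactly one coordinate; an edge of $\mathbf{T}_i$ is identified with the straight path of length $h_i$ in $\mathbf{T}_k$, and flipping it means adding that path mod 2. For $i\ge1$, a cell of $\mathbf{T}_i$ is a face with vertices $\alpha=(x,y)$ (top-left), $\beta=(x+h_i,y)$,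 $\gamma=(x,y-h_i)$, $\delta=(x+h_i,y-h_i)$ and edges $t=\alpha\beta$, $b=\gamma\delta$, $l=\alpha\gamma$, $r=\beta\delta$; a block of $\mathbf{T}_i$ is a square of side $2h_i$ with top-left corner in $V_{i-1}$, made of cells $A$ (top-left), $B$ (top-right), $C$ (bottom-left), $D$ (bottom-right). Reduction procedure on $\mathbf{T}_i$ (input $S\subseteq V_i$, output $\hat{\mathbf{e}}_i$ initially $0$; in each step tests use $S$ as at the start of the step, all blocks simultaneously). Step 1: in the $D$ cell of each block, if $\alpha,\delta\in S$ flip $l,b$; if $\beta,\gamma\in S$ flip $b,r$ (if all four are in $S$ only $l,r$ are flipped); remove paired vertices from $S$. Step 2: in the $C$ cell of each block, if $\alpha,\gamma\in S$ flip $l$, if $\beta,\delta\in S$ flip $r$; in the $B$ cell of each block, if $\alpha,\beta\in S$ flip $t$, if $\gamma,\delta\in S$ flip $b$; remove paired vertices. Step 3: in the $A$ cell of each block, if $\beta\in S$ flip $t$, if $\gamma\in S$ flip $l$, if $\delta\in S$ flip $l$ and $b$. Renormalisation decoder: $\hat{\mathbf{e}}=0$, $S=\sigma(\mathbf{e})$, $i=k$; while $S\ne\emptyset$ and $i>0$: run the reduction procedure on $\mathbf{T}_i$ to get $\hat{\mathbf{e}}_i$; $\hat{\mathbf{e}}\gets\hat{\mathbf{e}}+\hat{\mathbf{e}}_i$; $S\gets S\triangle\sigma(\hat{\mathbf{e}}_i)$; $i\gets i-1$. Output $\hat{\mathbf{e}}$. *)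

theory Defs
  imports Main
begin

text \<open>The paper's orientation is used: beta = alpha + (h,0), gamma = alpha - (0,h).
  An edge is a pair (v, d): for d = False it is the horizontal edge joining
  v = (x,y) to (x+1,y); for d = True the vertical edge joining (x,y) to (x,y+1)
  (coordinates mod N).  This is the standard cellulation of the torus with
  2 N^2 edges and N^2 faces.\<close>

type_synonym vtx = "int \<times> int"
type_synonym edge = "vtx \<times> bool"

definition symd :: "'a set \<Rightarrow> 'a set \<Rightarrow> 'a set" where
  "symd A B = (A - B) \<union> (B - A)"

definition vert :: "nat \<Rightarrow> int \<Rightarrow> int \<Rightarrow> vtx" where
  "vert k a b = (a mod 2^k, b mod 2^k)"

definition verts :: "nat \<Rightarrow> vtx set" where
  "verts k = {(x, y). 0 \<le> x \<and> x < 2^k \<and> 0 \<le> y \<and> y < 2^k}"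

definition edges :: "nat \<Rightarrow> edge set" where
  "edges k = {(v, d). v \<in> verts k}"

definition ends :: "nat \<Rightarrow> edge \<Rightarrow> vtx set" where
  "ends k ed = (case ed of ((x, y), d) \<Rightarrow>
      {(x, y), (if d then vert k x (y + 1) else vert k (x + 1) y)})"

definition syndrome :: "nat \<Rightarrow> edge set \<Rightarrow> vtx set" where
  "syndrome k e = {v \<in> verts k. odd (card {ed \<in> e. v \<in> ends k ed})}"

definition face :: "nat \<Rightarrow> vtx \<Rightarrow> edge set" where
  "face k v = (case v of (x, y) \<Rightarrow>
      {(vert k x y, False), (vert k x (y + 1), False),
       (vert k x y, True), (vert k (x + 1) y, True)})"

definition sum_of_faces :: "nat \<Rightarrow> edge set \<Rightarrow> bool" where
  "sum_of_faces k c \<longleftrightarrow>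
     (\<exists>F \<subseteq> verts k. c = {ed \<in> edges k. odd (card {v \<in> F. ed \<in> face k v})})"

definition hpath :: "nat \<Rightarrow> vtx \<Rightarrow> nat \<Rightarrow> edge set" where
  "hpath k c h = {(vert k (fst c + int j) (snd c), False) | j. j < h}"

definition vpath :: "nat \<Rightarrow> vtx \<Rightarrow> nat \<Rightarrow> edge set" where
  "vpath k c h = {(vert k (fst c) (snd c - int j - 1), True) | j. j < h}"

definition c_alpha :: "nat \<Rightarrow> nat \<Rightarrow> vtx \<Rightarrow> vtx" where
  "c_alpha k h c = vert k (fst c) (snd c)"
definition c_beta :: "nat \<Rightarrow> nat \<Rightarrow> vtx \<Rightarrow> vtx" where
  "c_beta k h c = vert k (fst c + int h) (snd c)"
definition c_gamma :: "nat \<Rightarrow> nat \<Rightarrow> vtx \<Rightarrow> vtx" where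
  "c_gamma k h c = vert k (fst c) (snd c - int h)"
definition c_delta :: "nat \<Rightarrow> nat \<Rightarrow> vtx \<Rightarrow> vtx" where
  "c_delta k h c = vert k (fst c + int h) (snd c - int h)"

definition c_t :: "nat \<Rightarrow> nat \<Rightarrow> vtx \<Rightarrow> edge set" where
  "c_t k h c = hpath k c h"
definition c_b :: "nat \<Rightarrow> nat \<Rightarrow> vtx \<Rightarrow> edge set" where
  "c_b k h c = hpath k (fst c, snd c - int h) h"
definition c_l :: "nat \<Rightarrow> nat \<Rightarrow> vtx \<Rightarrow> edge set" where
  "c_l k h c = vpath k c h"
definition c_r :: "nat \<Rightarrow> nat \<Rightarrow> vtx \<Rightarrow> edge set" where
  "c_r k h c = vpath k (fst c + int h, snd c) h"

definition hh :: "nat \<Rightarrow> nat \<Rightarrow> nat" where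
  "hh k i = 2 ^ (k - i)"

definition blocks :: "nat \<Rightarrow> nat \<Rightarrow> vtx set" where
  "blocks k i = {(2 * int (hh k i) * int a, 2 * int (hh k i) * int b) | a b.
                   a < 2 ^ (i - 1) \<and> b < 2 ^ (i - 1)}"

definition cA :: "nat \<Rightarrow> vtx \<Rightarrow> vtx" where "cA h bl = bl"
definition cB :: "nat \<Rightarrow> vtx \<Rightarrow> vtx" where "cB h bl = (fst bl + int h, snd bl)"
definition cC :: "nat \<Rightarrow> vtx \<Rightarrow> vtx" where "cC h bl = (fst bl, snd bl - int h)"
definition cD :: "nat \<Rightarrow> vtx \<Rightarrow> vtx" where "cD h bl = (fst bl + int h, snd bl - int h)"

definition opt :: "bool \<Rightarrow> 'a set \<Rightarrow> 'a set" where
  "opt P A = (if P then A else {})"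

definition xfam :: "'b set \<Rightarrow> ('b \<Rightarrow> 'a set) \<Rightarrow> 'a set" where
  "xfam J f = {x. odd (card {j \<in> J. x \<in> f j})}"

definition step1_flip :: "nat \<Rightarrow> nat \<Rightarrow> vtx set \<Rightarrow> vtx \<Rightarrow> edge set" where
  "step1_flip k h S bl = (let c = cD h bl in
     symd (opt (c_alpha k h c \<in> S \<and> c_delta k h c \<in> S) (symd (c_l k h c) (c_b k h c)))
          (opt (c_beta k h c \<in> S \<and> c_gamma k h c \<in> S) (symd (c_b k h c) (c_r k h c))))"

definition step1_pair :: "nat \<Rightarrow> nat \<Rightarrow> vtx set \<Rightarrow> vtx \<Rightarrow> vtx set" where
  "step1_pair k h S bl = (let c = cD h bl in
     opt (c_alpha k h c \<in> S \<and> c_delta k h c \<in> S) {c_alpha k h c, c_delta k h c}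
     \<union> opt (c_beta k h c \<in> S \<and> c_gamma k h c \<in> S) {c_beta k h c, c_gamma k h c})"

definition step2_flip :: "nat \<Rightarrow> nat \<Rightarrow> vtx set \<Rightarrow> vtx \<Rightarrow> edge set" where
  "step2_flip k h S bl = (let c = cC h bl; d = cB h bl in
     symd (symd (opt (c_alpha k h c \<in> S \<and> c_gamma k h c \<in> S) (c_l k h c))
                (opt (c_beta k h c \<in> S \<and> c_delta k h c \<in> S) (c_r k h c)))
          (symd (opt (c_alpha k h d \<in> S \<and> c_beta k h d \<in> S) (c_t k h d))
                (opt (c_gamma k h d \<in> S \<and> c_delta k h d \<in> S) (c_b k h d))))"

definition step2_pair :: "nat \<Rightarrow> nat \<Rightarrow> vtx set \<Rightarrow> vtx \<Rightarrow> vtx set" where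
  "step2_pair k h S bl = (let c = cC h bl; d = cB h bl in
     opt (c_alpha k h c \<in> S \<and> c_gamma k h c \<in> S) {c_alpha k h c, c_gamma k h c}
     \<union> opt (c_beta k h c \<in> S \<and> c_delta k h c \<in> S) {c_beta k h c, c_delta k h c}
     \<union> opt (c_alpha k h d \<in> S \<and> c_beta k h d \<in> S) {c_alpha k h d, c_beta k h d}
     \<union> opt (c_gamma k h d \<in> S \<and> c_delta k h d \<in> S) {c_gamma k h d, c_delta k h d})"

definition step3_flip :: "nat \<Rightarrow> nat \<Rightarrow> vtx set \<Rightarrow> vtx \<Rightarrow> edge set" where
  "step3_flip k h S bl = (let c = cA h bl in
     symd (opt (c_beta k h c \<in> S) (c_t k h c))
      (symd (opt (c_gamma k h c \<in> S) (c_l k h c))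
            (opt (c_delta k h c \<in> S) (symd (c_l k h c) (c_b k h c)))))"

definition reduce :: "nat \<Rightarrow> nat \<Rightarrow> vtx set \<Rightarrow> edge set" where
  "reduce k i S = (let h = hh k i; Bs = blocks k i;
     F1 = xfam Bs (step1_flip k h S);
     S1 = S - (\<Union>bl\<in>Bs. step1_pair k h S bl);
     F2 = xfam Bs (step2_flip k h S1);
     S2 = S1 - (\<Union>bl\<in>Bs. step2_pair k h S1 bl);
     F3 = xfam Bs (step3_flip k h S2)
   in symd F1 (symd F2 F3))"

fun decode_from :: "nat \<Rightarrow> nat \<Rightarrow> vtx set \<Rightarrow> edge set \<Rightarrow> edge set" where
  "decode_from k 0 S acc = acc"
| "decode_from k (Suc j) S acc =
     (if S = {} then acc
      else (let f = reduce k (Suc j) S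
            in decode_from k j (symd S (syndrome k f)) (symd acc f)))"

definition decoder :: "nat \<Rightarrow> edge set \<Rightarrow> edge set" where
  "decoder k e = decode_from k k (syndrome k e) {}"

definition decoded_correctly :: "nat \<Rightarrow> edge set \<Rightarrow> bool" where
  "decoded_correctly k e \<longleftrightarrow> sum_of_faces k (symd e (decoder k e))"

definition omega :: "nat \<Rightarrow> nat" where
  "omega k = (GREATEST w. \<forall>e. e \<subseteq> edges k \<and> card e \<le> w \<longrightarrow> decoded_correctly k e)"

fun u :: "nat \<Rightarrow> nat" where
  "u 0 = 0"
| "u (Suc 0) = 1"
| "u (Suc (Suc 0)) = 2"
| "u (Suc (Suc (Suc 0))) = 3"
| "u (Suc (Suc (Suc (Suc k)))) = 2 * u (Suc (Suc k))"

end

theory Submission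
  imports Defs
begin


definition maj :: "bool \<Rightarrow> bool \<Rightarrow> bool \<Rightarrow> bool" where
  "maj a b c = ((a \<and> b) \<or> (a \<and> c) \<or> (b \<and> c))"

definition mstep :: "(int \<Rightarrow> bool) \<Rightarrow> int \<Rightarrow> bool" where
  "mstep g y = maj (g (2*y)) (g (2*y+1)) (g (2*y+2))"

fun MM :: "nat \<Rightarrow> (int \<Rightarrow> bool) \<Rightarrow> bool" where
  "MM 0 g = g 0"
| "MM (Suc j) g = MM j (mstep g)"

lemma mstep_mono: "(\<And>x. g x \<Longrightarrow> g' x) \<Longrightarrow> mstep g y \<Longrightarrow> mstep g' y"
  unfolding mstep_def maj_def by blast

lemma mstep_mono': "mstep g y \<Longrightarrow> (\<And>x. g x \<Longrightarrow> g' x) \<Longrightarrow> mstep g' y"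
  using mstep_mono by blast

lemma MM_mono: "(\<And>x. g x \<Longrightarrow> g' x) \<Longrightarrow> MM j g \<Longrightarrow> MM j g'"
proof (induction j arbitrary: g g')
  case 0 then show ?case by simp
next
  case (Suc j)
  have "\<And>y. mstep g y \<Longrightarrow> mstep g' y" using Suc.prems(1) by (rule mstep_mono)
  then have "MM j (mstep g')" using Suc.IH[of "mstep g" "mstep g'"] Suc.prems(2) by simp
  then show ?case by simp
qed

definition memb :: "nat \<Rightarrow> int set \<Rightarrow> int \<Rightarrow> bool" where
  "memb n P y = (\<exists>p\<in>P. y mod 2^n = p mod 2^n)"

definition pairset :: "int set \<Rightarrow> int set" where
  "pairset X = (\<Union>x\<in>X. {x, x+1})"
definition run3set :: "int set \<Rightarrow> int set" where
  "run3set X = (\<Union>x\<in>X. {x, x+1, x+2})"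

lemma modcong2: "(y::int) mod 2^n = x mod 2^n \<Longrightarrow> (2*y + c) mod 2^(Suc n) = (2*x + c) mod 2^(Suc n)"
  by (metis mod_add_cong mod_mult_mult1 power_Suc)

lemma memb_I: "p \<in> P \<Longrightarrow> y mod 2^n = p mod 2^n \<Longrightarrow> memb n P y"
  unfolding memb_def by blast
lemma run3_I: "x \<in> T \<Longrightarrow> x \<in> run3set T" "x \<in> T \<Longrightarrow> x+1 \<in> run3set T" "x \<in> T \<Longrightarrow> x+2 \<in> run3set T"
  unfolding run3set_def by blast+
lemma pair_I: "x \<in> T \<Longrightarrow> x \<in> pairset T" "x \<in> T \<Longrightarrow> x+1 \<in> pairset T"
  unfolding pairset_def by blast+
lemma maj12: "b \<Longrightarrow> c \<Longrightarrow> maj a b c" and maj01: "a \<Longrightarrow> b \<Longrightarrow> maj a b c" and maj02: "a \<Longrightarrow> c \<Longrightarrow> maj a b c"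
  unfolding maj_def by blast+

lemma step_pair:
  assumes "memb n (pairset X) y"
  shows "mstep (memb (Suc n) (run3set ((\<lambda>x. 2*x+1) ` X))) y"
proof -
  obtain x where x: "x \<in> X" and dj: "y mod 2^n = x mod 2^n \<or> y mod 2^n = (x+1) mod 2^n"
    using assms unfolding memb_def pairset_def by blast
  have xi: "2*x+1 \<in> (\<lambda>x. 2*x+1) ` X" using x by blast
  from dj show ?thesis
  proof
    assume h: "y mod 2^n = x mod 2^n"
    have "(2*y+1) mod 2^(Suc n) = (2*x+1) mod 2^(Suc n)" "(2*y+2) mod 2^(Suc n) = (2*x+1+1) mod 2^(Suc n)"
      using modcong2[OF h, of 1] modcong2[OF h, of 2] by (simp_all add: add.assoc)
    then show ?thesis unfolding mstep_def
      by (intro maj12 memb_I[OF run3_I(1)[OF xi]] memb_I[OF run3_I(2)[OF xi]])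
  next
    assume h: "y mod 2^n = (x+1) mod 2^n"
    have "(2*y) mod 2^(Suc n) = (2*x+1+1) mod 2^(Suc n)" "(2*y+1) mod 2^(Suc n) = (2*x+1+2) mod 2^(Suc n)"
      using modcong2[OF h, of 0] modcong2[OF h, of 1] by (simp_all add: algebra_simps)
    then show ?thesis unfolding mstep_def
      by (intro maj01 memb_I[OF run3_I(2)[OF xi]] memb_I[OF run3_I(3)[OF xi]])
  qed
qed

lemma step_run:
  assumes "memb n (run3set T) y"
  shows "mstep (memb (Suc n) (pairset ((\<lambda>t. 2*t+1) ` T \<union> (\<lambda>t. 2*t+4) ` T))) y"
proof -
  obtain t where t: "t \<in> T" and "y mod 2^n = t mod 2^n \<or> y mod 2^n = (t+1) mod 2^n \<or> y mod 2^n = (t+2) mod 2^n"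
    using assms unfolding memb_def run3set_def by blast
  have t1: "2*t+1 \<in> (\<lambda>t. 2*t+1) ` T \<union> (\<lambda>t. 2*t+4) ` T" using t by blast
  have t4: "2*t+4 \<in> (\<lambda>t. 2*t+1) ` T \<union> (\<lambda>t. 2*t+4) ` T" using t by blast
  consider "y mod 2^n = t mod 2^n" | "y mod 2^n = (t+1) mod 2^n" | "y mod 2^n = (t+2) mod 2^n"
    using \<open>y mod 2^n = t mod 2^n \<or> _\<close> by blast
  then show ?thesis
  proof cases
    case 1
    have "(2*y+1) mod 2^(Suc n) = (2*t+1) mod 2^(Suc n)" "(2*y+2) mod 2^(Suc n) = (2*t+1+1) mod 2^(Suc n)"
      using modcong2[OF 1, of 1] modcong2[OF 1, of 2] by (simp_all add: add.assoc)
    then show ?thesis unfolding mstep_def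
      by (intro maj12 memb_I[OF pair_I(1)[OF t1]] memb_I[OF pair_I(2)[OF t1]])
  next
    case 2
    have "(2*y) mod 2^(Suc n) = (2*t+1+1) mod 2^(Suc n)" "(2*y+2) mod 2^(Suc n) = (2*t+4) mod 2^(Suc n)"
      using modcong2[OF 2, of 0] modcong2[OF 2, of 2] by (simp_all add: algebra_simps)
    then show ?thesis unfolding mstep_def
      by (intro maj02 memb_I[OF pair_I(2)[OF t1]] memb_I[OF pair_I(1)[OF t4]])
  next
    case 3
    have "(2*y) mod 2^(Suc n) = (2*t+4) mod 2^(Suc n)" "(2*y+1) mod 2^(Suc n) = (2*t+4+1) mod 2^(Suc n)"
      using modcong2[OF 3, of 0] modcong2[OF 3, of 1] by (simp_all add: algebra_simps)
    then show ?thesis unfolding mstep_def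
      by (intro maj01 memb_I[OF pair_I(1)[OF t4]] memb_I[OF pair_I(2)[OF t4]])
  qed
qed

fun AA :: "nat \<Rightarrow> int set" where
  "AA 0 = {0}"
| "AA (Suc m) = (let B = (\<lambda>x. 2*x+1) ` AA m in (\<lambda>t. 2*t+1) ` B \<union> (\<lambda>t. 2*t+4) ` B)"

definition BB :: "nat \<Rightarrow> int set" where
  "BB m = (\<lambda>x. 2*x+1) ` AA m"

lemma AA_fin: "finite (AA m)" by (induction m) (auto simp: Let_def)

lemma AA_card: "card (AA m) \<le> 2^m"
proof (induction m)
  case 0 then show ?case by simp
next
  case (Suc m)
  let ?B = "(\<lambda>x. 2*x+1) ` AA m"
  have cB: "card ?B \<le> 2^m" using Suc card_image_le[OF AA_fin, of "\<lambda>x. 2*x+1" m] by linarith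
  have "card (AA (Suc m)) \<le> card ((\<lambda>t. 2*t+1) ` ?B) + card ((\<lambda>t. 2*t+4) ` ?B)"
    by (simp add: Let_def card_Un_le)
  also have "\<dots> \<le> card ?B + card ?B"
    using card_image_le AA_fin by (meson add_mono finite_imageI)
  finally show ?case using cB by simp
qed

lemma win_even: "MM (2*m+2) (memb (2*m+2) (pairset (AA m)))"
proof (induction m)
  case 0
  show ?case
    by (simp add: mstep_def maj_def memb_def pairset_def)
next
  case (Suc m)
  have "MM (2*m+2) (mstep (mstep (memb (2*m+4) (pairset (AA (Suc m))))))"
  proof (rule MM_mono[OF _ Suc.IH])
    fix x assume "memb (2*m+2) (pairset (AA m)) x"
    then have "mstep (memb (Suc (2*m+2)) (run3set (BB m))) x"
      unfolding BB_def by (rule step_pair)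
    then show "mstep (mstep (memb (2*m+4) (pairset (AA (Suc m))))) x"
    proof (rule mstep_mono')
      fix z assume "memb (Suc (2*m+2)) (run3set (BB m)) z"
      then have "mstep (memb (Suc (Suc (2*m+2))) (pairset ((\<lambda>t. 2*t+1) ` BB m \<union> (\<lambda>t. 2*t+4) ` BB m))) z"
        by (rule step_run)
      then show "mstep (memb (2*m+4) (pairset (AA (Suc m)))) z"
        by (simp add: BB_def Let_def numeral_eq_Suc)
    qed
  qed
  then show ?case by (simp add: numeral_eq_Suc)
qed

lemma win_odd: "MM (2*m+3) (memb (2*m+3) (run3set (BB m)))"
proof -
  have "MM (2*m+2) (mstep (memb (2*m+3) (run3set (BB m))))"
  proof (rule MM_mono[OF _ win_even])
    fix x assume "memb (2*m+2) (pairset (AA m)) x"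
    then have "mstep (memb (Suc (2*m+2)) (run3set (BB m))) x"
      unfolding BB_def by (rule step_pair)
    then show "mstep (memb (2*m+3) (run3set (BB m))) x" by (simp add: numeral_eq_Suc)
  qed
  then show ?thesis by (simp add: numeral_eq_Suc)
qed

lemma win_one: "MM 1 (memb 1 {0})"
  by (simp add: mstep_def maj_def memb_def)

lemma u_even: "u (2*m+2) = 2^(m+1)"
proof (induction m)
  case 0 show ?case by (simp add: eval_nat_numeral)
next
  case (Suc m)
  have "2 * Suc m + 2 = Suc (Suc (Suc (Suc (2*m))))" by simp
  then have "u (2 * Suc m + 2) = 2 * u (2*m+2)" by (simp add: eval_nat_numeral)
  then show ?case using Suc by simp
qed

lemma u_odd: "u (2*m+3) = 3 * 2^m"
proof (induction m)
  case 0 show ?case by (simp add: eval_nat_numeral)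
next
  case (Suc m)
  have "2 * Suc m + 3 = Suc (Suc (Suc (Suc (Suc (2*m)))))" by simp
  then have "u (2 * Suc m + 3) = 2 * u (2*m+3)" by (simp add: eval_nat_numeral)
  then show ?case using Suc by simp
qed


lemma div_iff_bounds:
  fixes H x c :: int
  assumes "H > 0"
  shows "x div H = c \<longleftrightarrow> c*H \<le> x \<and> x < (c+1)*H"
proof
  assume "x div H = c"
  moreover have "x = (x div H)*H + x mod H" by simp
  moreover have "0 \<le> x mod H" "x mod H < H" using assms by simp_all
  ultimately show "c*H \<le> x \<and> x < (c+1)*H" by (simp add: algebra_simps)
next
  assume b: "c*H \<le> x \<and> x < (c+1)*H"
  define r where "r = x - c*H"
  have r: "0 \<le> r" "r < H" using b by (simp_all add: r_def algebra_simps)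
  have "x = r + c*H" by (simp add: r_def)
  then have "x div H = c + r div H" using assms by simp
  then show "x div H = c" using r by simp
qed
lemma mod_div_swap:
  fixes H M z :: int
  assumes "H > 0" "M > 0"
  shows "(z mod (H*M)) div H = (z div H) mod M"
  using assms zmod_zmult2_eq by simp

definition rowset :: "nat \<Rightarrow> (int \<Rightarrow> bool) \<Rightarrow> edge set" where
  "rowset k P = {((x,0),False) | x. 0 \<le> x \<and> x < 2^k \<and> P x}"
definition rowv :: "nat \<Rightarrow> (int \<Rightarrow> bool) \<Rightarrow> vtx set" where
  "rowv k P = {(x,0) | x. 0 \<le> x \<and> x < 2^k \<and> P x}"

lemma mem_rowset: "ed \<in> rowset k P \<longleftrightarrow> (\<exists>x. ed = ((x,0),False) \<and> 0 \<le> x \<and> x < 2^k \<and> P x)"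
  unfolding rowset_def by blast
lemma mem_rowv: "v \<in> rowv k P \<longleftrightarrow> (snd v = 0 \<and> 0 \<le> fst v \<and> fst v < 2^k \<and> P (fst v))"
  unfolding rowv_def by (cases v) auto

lemma m1: "(N::int) \<ge> 2 \<Longrightarrow> (-1) mod N = N - 1"
  by (simp add: zmod_zminus1_eq_if)
lemma N2: "k \<ge> 1 \<Longrightarrow> (2::int)^k \<ge> 2"
  by (metis power_increasing power_one_right one_le_numeral)
lemma pred_mod: "(N::int) \<ge> 2 \<Longrightarrow> 0 \<le> a \<Longrightarrow> a < N \<Longrightarrow> (a-1) mod N = (if a = 0 then N-1 else a-1)"
  using m1 by auto

lemma mod_pred_iff:
  fixes N x a :: int
  assumes "N \<ge> 2" "0 \<le> x" "x < N" "0 \<le> a" "a < N"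
  shows "(x+1) mod N = a \<longleftrightarrow> x = (a-1) mod N"
proof -
  have xa: "(x+1) mod N = (if x = N-1 then 0 else x+1)" using assms by auto
  have aa: "(a-1) mod N = (if a = 0 then N-1 else a-1)" using assms m1 by auto
  show ?thesis unfolding xa aa using assms by auto
qed

lemma syndrome_rowset:
  assumes "k \<ge> 1"
  shows "syndrome k (rowset k P) = rowv k (\<lambda>x. P x \<noteq> P ((x-1) mod 2^k))"
proof -
  have N2: "(2::int)^k \<ge> 2" using assms by (rule N2)
  have key: "odd (card {ed \<in> rowset k P. (a,b) \<in> ends k ed}) \<longleftrightarrow> b = 0 \<and> P a \<noteq> P ((a-1) mod 2^k)"
    if ab: "0 \<le> a" "a < 2^k" "0 \<le> b" "b < 2^k" for a b
  proof -
    let ?N = "(2::int)^k"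
    let ?a' = "(a-1) mod ?N"
    have a'r: "0 \<le> ?a'" "?a' < ?N" by simp_all
    have ne: "?a' \<noteq> a"
      using pred_mod[OF N2 ab(1,2)] N2 by auto
    have eq: "{ed \<in> rowset k P. (a,b) \<in> ends k ed} =
      (if b = 0 \<and> P a then {((a,0),False)} else {}) \<union> (if b = 0 \<and> P ?a' then {((?a',0),False)} else {})"
    proof (rule set_eqI)
      fix ed
      show "ed \<in> {ed \<in> rowset k P. (a,b) \<in> ends k ed} \<longleftrightarrow> ed \<in> (if b = 0 \<and> P a then {((a,0),False)} else {}) \<union> (if b = 0 \<and> P ?a' then {((?a',0),False)} else {})"
      proof
        assume "ed \<in> {ed \<in> rowset k P. (a,b) \<in> ends k ed}"
        then obtain x where x: "ed = ((x,0),False)" "0 \<le> x" "x < ?N" "P x" and e: "(a,b) \<in> ends k ed"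
          unfolding mem_rowset by blast
        from e x have "(a = x \<and> b = 0) \<or> (a = (x+1) mod ?N \<and> b = 0)"
          by (auto simp: ends_def vert_def)
        then show "ed \<in> (if b = 0 \<and> P a then {((a,0),False)} else {}) \<union> (if b = 0 \<and> P ?a' then {((?a',0),False)} else {})"
          using mod_pred_iff[OF N2 x(2,3) ab(1,2)] x by auto
      next
        assume "ed \<in> (if b = 0 \<and> P a then {((a,0),False)} else {}) \<union> (if b = 0 \<and> P ?a' then {((?a',0),False)} else {})"
        then show "ed \<in> {ed \<in> rowset k P. (a,b) \<in> ends k ed}"
        proof (cases "b = 0 \<and> P a \<and> ed = ((a,0),False)")
          case True then show ?thesis using ab by (auto simp: mem_rowset ends_def vert_def)
        next
          case False
          then have "b = 0" "P ?a'" "ed = ((?a',0),False)"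
            using \<open>ed \<in> _\<close> by (auto split: if_splits)
          moreover have "(?a' + 1) mod ?N = a" using mod_pred_iff[OF N2 a'r ab(1,2)] by simp
          ultimately show ?thesis using a'r by (auto simp: mem_rowset ends_def vert_def)
        qed
      qed
    qed
    show ?thesis unfolding eq using ne by (auto simp: card_insert_if)
  qed
  show ?thesis
  proof (rule set_eqI)
    fix v :: vtx
    obtain a b where v: "v = (a,b)" by (cases v)
    show "v \<in> syndrome k (rowset k P) \<longleftrightarrow> v \<in> rowv k (\<lambda>x. P x \<noteq> P ((x-1) mod 2^k))"
      unfolding syndrome_def mem_rowv v verts_def using key[of a b] N2 by auto
  qed
qed


lemma xfam_unique:
  assumes "\<And>x j1 j2. j1 \<in> J \<Longrightarrow> j2 \<in> J \<Longrightarrow> x \<in> f j1 \<Longrightarrow> x \<in> f j2 \<Longrightarrow> j1 = j2"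
  shows "xfam J f = (\<Union>j\<in>J. f j)"
proof (rule set_eqI)
  fix x
  show "x \<in> xfam J f \<longleftrightarrow> x \<in> (\<Union>j\<in>J. f j)"
  proof (cases "\<exists>j\<in>J. x \<in> f j")
    case True
    then obtain j0 where j0: "j0 \<in> J" "x \<in> f j0" by blast
    then have "{j \<in> J. x \<in> f j} = {j0}" using assms by blast
    then show ?thesis unfolding xfam_def using j0 by auto
  next
    case False
    then have e: "{j \<in> J. x \<in> f j} = {}" by blast
    show ?thesis unfolding xfam_def using False by (simp add: e)
  qed
qed

lemma xfam_empty: "(\<And>j. j \<in> J \<Longrightarrow> f j = {}) \<Longrightarrow> xfam J f = {}"
proof -
  assume a: "\<And>j. j \<in> J \<Longrightarrow> f j = {}"
  have e: "\<And>x. {j \<in> J. x \<in> f j} = {}" using a by blast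
  show ?thesis unfolding xfam_def by (simp only: e card.empty) simp
qed

lemma symd_rowset: "symd (rowset k P) (rowset k Q) = rowset k (\<lambda>x. P x \<noteq> Q x)"
  unfolding symd_def rowset_def by auto

lemma symd_empty: "symd {} A = A" "symd A {} = A" unfolding symd_def by auto

definition HH :: "nat \<Rightarrow> nat \<Rightarrow> int" where "HH k j = (2::int)^(k - Suc j)"
definition Phi :: "nat \<Rightarrow> nat \<Rightarrow> (int \<Rightarrow> bool) \<Rightarrow> int \<Rightarrow> bool" where "Phi k j g x = g (x div HH k j)"
definition SS :: "nat \<Rightarrow> nat \<Rightarrow> (int \<Rightarrow> bool) \<Rightarrow> vtx set" where "SS k j g = syndrome k (rowset k (Phi k j g))"
definition Pv :: "(int \<Rightarrow> bool) \<Rightarrow> int \<Rightarrow> bool" where "Pv g c = (g c \<noteq> g (c-1))"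
definition S2set :: "nat \<Rightarrow> nat \<Rightarrow> (int \<Rightarrow> bool) \<Rightarrow> vtx set" where
  "S2set k j g = SS k j g - (\<Union>bl\<in>blocks k (Suc j). step2_pair k (hh k (Suc j)) (SS k j g) bl)"

context
  fixes k j :: nat and g :: "int \<Rightarrow> bool"
  assumes jk: "Suc j \<le> k" and per: "\<And>c. g c = g (c mod 2^(Suc j))"
begin


lemma HH_pos: "HH k j > 0" unfolding HH_def by simp

lemma NN_eq: "(2::int)^k = HH k j * 2^(Suc j)"
proof -
  have "k = (k - Suc j) + Suc j" using jk by simp
  then have "(2::int)^k = 2^(k - Suc j) * 2^(Suc j)" by (metis power_add)
  then show ?thesis unfolding HH_def .
qed

lemma NN_eq2: "(2::int)^k = 2 * HH k j * 2^j"
  using NN_eq by simp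

lemma hh_eq: "int (hh k (Suc j)) = HH k j"
  unfolding hh_def HH_def by simp

lemma k1: "k \<ge> 1" using jk by simp

lemma Phi_mod: "(Phi k j g) (z mod 2^k) = g (z div HH k j)"
proof -
  have "(z mod (HH k j * 2^(Suc j))) div HH k j = (z div HH k j) mod 2^(Suc j)"
    using mod_div_swap[OF HH_pos, of "2^(Suc j)" z] by simp
  then show ?thesis unfolding Phi_def NN_eq using per by metis
qed

lemma SS_eq: "(SS k j g) = rowv k (\<lambda>x. (Phi k j g) x \<noteq> (Phi k j g) ((x-1) mod 2^k))"
  unfolding SS_def using syndrome_rowset[OF k1] .

lemma vert_SS: "vert k z y \<in> (SS k j g) \<longleftrightarrow> y mod 2^k = 0 \<and> g (z div HH k j) \<noteq> g ((z-1) div HH k j)"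
proof -
  have "(z mod 2^k - 1) mod 2^k = (z - 1) mod (2::int)^k" by (simp add: mod_diff_left_eq)
  then show ?thesis unfolding SS_eq vert_def mem_rowv using Phi_mod by simp
qed

lemma vert_cH: "vert k (c*HH k j) y \<in> (SS k j g) \<longleftrightarrow> y mod 2^k = 0 \<and> Pv g c"
proof -
  have "(c*HH k j) div HH k j = c" using HH_pos by simp
  moreover have "(c*HH k j - 1) div HH k j = c - 1"
    by (subst div_iff_bounds[OF HH_pos]) (use HH_pos in \<open>simp add: algebra_simps\<close>)
  ultimately show ?thesis unfolding vert_SS Pv_def by simp
qed

lemma offrow: "b < 2^j \<Longrightarrow> (2*HH k j*int b - HH k j) mod 2^k \<noteq> 0"
proof
  assume b: "b < 2^j" and m: "(2*HH k j*int b - HH k j) mod 2^k = 0"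
  then have "HH k j * 2^(Suc j) dvd HH k j * (2*int b - 1)" unfolding NN_eq by (simp add: algebra_simps mod_eq_0_iff_dvd)
  then have "(2::int)^(Suc j) dvd (2*int b - 1)" using HH_pos by simp
  then have "(2::int) dvd (2*int b - 1)" by (meson dvd_power dvd_trans zero_less_Suc)
  then show False by presburger
qed

lemma onrow: "b < 2^j \<Longrightarrow> (2*HH k j*int b) mod 2^k = 0 \<longleftrightarrow> b = 0"
proof -
  assume b: "b < 2^j"
  have "int b < 2^j" using b by (metis of_nat_less_iff of_nat_numeral of_nat_power) 
  then have "2*HH k j*int b < 2*HH k j*2^j" using HH_pos by simp
  then have "(2*HH k j*int b) mod 2^k = 2*HH k j*int b" unfolding NN_eq2 using HH_pos by simp
  then show ?thesis using HH_pos by simp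
qed

lemma offrow_notin: "b < 2^j \<Longrightarrow> vert k z (2*HH k j*int b - HH k j) \<notin> (SS k j g)"
  using offrow vert_SS by blast

lemma blocks_obtain:
  assumes "bl \<in> blocks k (Suc j)"
  obtains a b where "bl = (2*HH k j*int a, 2*HH k j*int b)" "a < 2^j" "b < 2^j"
  using assms unfolding blocks_def hh_eq by auto


lemma s1f: assumes "b < 2^j"
  shows "step1_flip k (hh k (Suc j)) (SS k j g) (2*HH k j*int a, 2*HH k j*int b) = {}"
  using offrow_notin[OF assms]
  by (simp add: step1_flip_def Let_def cD_def c_alpha_def c_beta_def c_gamma_def c_delta_def hh_eq opt_def symd_def)

lemma s1p: assumes "b < 2^j"
  shows "step1_pair k (hh k (Suc j)) (SS k j g) (2*HH k j*int a, 2*HH k j*int b) = {}"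
  using offrow_notin[OF assms]
  by (simp add: step1_pair_def Let_def cD_def c_alpha_def c_beta_def c_gamma_def c_delta_def hh_eq opt_def)

lemma s2f: assumes "b < 2^j"
  shows "step2_flip k (hh k (Suc j)) (SS k j g) (2*HH k j*int a, 2*HH k j*int b) =
     opt (b = 0 \<and> Pv g (2*int a+1) \<and> Pv g (2*int a+2)) (hpath k ((2*int a+1)*HH k j, 0) (hh k (Suc j)))"
proof -
  have e1: "2*HH k j*int a + HH k j = (2*int a+1)*HH k j" "(2*int a+1)*HH k j + HH k j = (2*int a+2)*HH k j"
    by (simp_all add: algebra_simps)
  have r: "(2*HH k j*int b) mod 2^k = 0 \<longleftrightarrow> b = 0" using onrow[OF assms] .
  show ?thesis
    using offrow_notin[OF assms] vert_cH r
    by (auto simp add: step2_flip_def Let_def cB_def cC_def c_alpha_def c_beta_def c_gamma_def c_delta_def c_t_def hh_eq opt_def symd_def e1)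
qed

lemma s2p: assumes "b < 2^j"
  shows "step2_pair k (hh k (Suc j)) (SS k j g) (2*HH k j*int a, 2*HH k j*int b) =
     opt (b = 0 \<and> Pv g (2*int a+1) \<and> Pv g (2*int a+2)) {vert k ((2*int a+1)*HH k j) 0, vert k ((2*int a+2)*HH k j) 0}"
proof -
  have e1: "2*HH k j*int a + HH k j = (2*int a+1)*HH k j" "(2*int a+1)*HH k j + HH k j = (2*int a+2)*HH k j"
    by (simp_all add: algebra_simps)
  have r: "(2*HH k j*int b) mod 2^k = 0 \<longleftrightarrow> b = 0" using onrow[OF assms] .
  show ?thesis
    using offrow_notin[OF assms] vert_cH r
    by (auto simp add: step2_pair_def Let_def cB_def cC_def c_alpha_def c_beta_def c_gamma_def c_delta_def hh_eq opt_def e1)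
qed

lemma s3f: assumes "b < 2^j" "T \<subseteq> (SS k j g)"
  shows "step3_flip k (hh k (Suc j)) T (2*HH k j*int a, 2*HH k j*int b) =
     opt (b = 0 \<and> vert k ((2*int a+1)*HH k j) 0 \<in> T) (hpath k ((2*int a)*HH k j, 0) (hh k (Suc j)))"
proof -
  have e1: "2*HH k j*int a = (2*int a)*HH k j" "(2*int a)*HH k j + HH k j = (2*int a+1)*HH k j"
    by (simp_all add: algebra_simps)
  have r: "(2*HH k j*int b) mod 2^k = 0 \<longleftrightarrow> b = 0" using onrow[OF assms(1)] .
  have n: "\<And>z. vert k z (2*HH k j*int b - HH k j) \<notin> T" using offrow_notin[OF assms(1)] assms(2) by blast
  have "b \<noteq> 0 \<Longrightarrow> vert k ((2*int a+1)*HH k j) (2*HH k j*int b) \<notin> T" using vert_cH r assms(2) by blast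
  then show ?thesis
    using n
    by (cases "b = 0") (auto simp add: step3_flip_def Let_def cA_def c_alpha_def c_beta_def c_gamma_def c_delta_def c_t_def c_l_def c_b_def hh_eq opt_def symd_def e1)
qed


lemma cHH_le: assumes "c < 2^(Suc j)" shows "(c+1)*HH k j \<le> 2^k"
proof -
  have "c + 1 \<le> 2^(Suc j)" using assms by simp
  then have "(c+1)*HH k j \<le> 2^(Suc j) * HH k j" using HH_pos by (intro mult_right_mono) simp_all
  then show ?thesis unfolding NN_eq by (simp add: mult.commute)
qed

lemma hpath_row:
  assumes "0 \<le> c" "c < 2^(Suc j)"
  shows "hpath k (c*HH k j, 0) (hh k (Suc j)) = rowset k (\<lambda>x. x div HH k j = c)"
proof (rule set_eqI)
  fix ed
  have le: "(c+1)*HH k j \<le> 2^k" using cHH_le[OF assms(2)] .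
  show "ed \<in> hpath k (c*HH k j, 0) (hh k (Suc j)) \<longleftrightarrow> ed \<in> rowset k (\<lambda>x. x div HH k j = c)"
  proof
    assume "ed \<in> hpath k (c*HH k j, 0) (hh k (Suc j))"
    then obtain i where i: "i < hh k (Suc j)" "ed = (vert k (c*HH k j + int i) 0, False)"
      unfolding hpath_def by auto
    have ii: "int i < HH k j" using i(1) hh_eq by linarith
    have b: "0 \<le> c*HH k j + int i" "c*HH k j + int i < (c+1)*HH k j" using assms HH_pos ii by (simp_all add: algebra_simps)
    then have "(c*HH k j + int i) mod 2^k = c*HH k j + int i" using le by simp
    moreover have "(c*HH k j + int i) div HH k j = c" using div_iff_bounds[OF HH_pos] b by simp
    ultimately show "ed \<in> rowset k (\<lambda>x. x div HH k j = c)"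
      unfolding mem_rowset i(2) vert_def using b le by auto
  next
    assume "ed \<in> rowset k (\<lambda>x. x div HH k j = c)"
    then obtain x where x: "ed = ((x,0),False)" "0 \<le> x" "x < 2^k" "x div HH k j = c"
      unfolding mem_rowset by blast
    have b: "c*HH k j \<le> x" "x < (c+1)*HH k j" using div_iff_bounds[OF HH_pos] x(4) by auto
    define i where "i = nat (x - c*HH k j)"
    have "int i = x - c*HH k j" using b unfolding i_def by simp
    then have "i < hh k (Suc j)" using b hh_eq by (simp add: algebra_simps)
    moreover have "ed = (vert k (c*HH k j + int i) 0, False)"
      unfolding x(1) vert_def using \<open>int i = x - c*HH k j\<close> x(2,3) by simp
    ultimately show "ed \<in> hpath k (c*HH k j, 0) (hh k (Suc j))"
      unfolding hpath_def by auto
  qed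
qed

lemma vert0_eq: "vert k z1 0 = vert k z2 0 \<longleftrightarrow> z1 mod 2^k = z2 mod 2^k"
  unfolding vert_def by simp

lemma cHH_mod: "(c*HH k j) mod 2^k = (c mod 2^(Suc j)) * HH k j"
  unfolding NN_eq by (simp add: mult_mod_left mult.commute)

lemma vert_odd_even: "vert k ((2*x+1)*HH k j) 0 \<noteq> vert k ((2*y+2)*HH k j) 0"
proof
  assume "vert k ((2*x+1)*HH k j) 0 = vert k ((2*y+2)*HH k j) 0"
  then have "((2*x+1) mod 2^(Suc j)) * HH k j = ((2*y+2) mod 2^(Suc j)) * HH k j"
    unfolding vert0_eq cHH_mod .
  then have e: "(2*x+1) mod 2^(Suc j) = (2*y+2) mod 2^(Suc j)" using HH_pos by simp
  have d: "(2::int) dvd 2^(Suc j)" by simp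
  have "(2*x+1) mod 2^(Suc j) mod 2 = (2*y+2) mod 2^(Suc j) mod 2" using e by simp
  then have "(2*x+1) mod 2 = (2*y+2) mod 2" using mod_mod_cancel[OF d] by simp
  then show False by presburger
qed

lemma vert_odd_inj: assumes "a < 2^j" "a' < 2^j"
  and "vert k ((2*int a+1)*HH k j) 0 = vert k ((2*int a'+1)*HH k j) 0" shows "a = a'"
proof -
  have "((2*int a+1) mod 2^(Suc j)) * HH k j = ((2*int a'+1) mod 2^(Suc j)) * HH k j"
    using assms(3) unfolding vert0_eq cHH_mod .
  then have e: "(2*int a+1) mod 2^(Suc j) = (2*int a'+1) mod 2^(Suc j)" using HH_pos by simp
  have "int a < 2^j" "int a' < 2^j" using assms(1,2) by (metis of_nat_less_iff of_nat_numeral of_nat_power)+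
  moreover have "(2::int)^(Suc j) = 2*2^j" by simp
  ultimately have "2*int a+1 < 2^(Suc j)" "2*int a'+1 < 2^(Suc j)" by linarith+
  then show ?thesis using e by simp
qed

lemma block_in: "a < 2^j \<Longrightarrow> (2*HH k j*int a, 0) \<in> blocks k (Suc j)"
  unfolding blocks_def hh_eq by (rule CollectI, rule exI[of _ a], rule exI[of _ 0]) simp


lemma S2_sub: "(S2set k j g) \<subseteq> (SS k j g)" unfolding S2set_def by blast

lemma S2mem: assumes a: "a < 2^j"
  shows "vert k ((2*int a+1)*HH k j) 0 \<in> (S2set k j g) \<longleftrightarrow> Pv g (2*int a+1) \<and> \<not> Pv g (2*int a+2)"
proof
  assume h: "vert k ((2*int a+1)*HH k j) 0 \<in> (S2set k j g)"
  then have "Pv g (2*int a+1)" using S2_sub vert_cH by blast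
  moreover have "\<not> Pv g (2*int a+2)"
  proof
    assume p: "Pv g (2*int a+2)"
    have "vert k ((2*int a+1)*HH k j) 0 \<in> step2_pair k (hh k (Suc j)) (SS k j g) (2*HH k j*int a, 2*HH k j*int 0)"
      using s2p[of 0 a] p \<open>Pv g (2*int a+1)\<close> by (simp add: opt_def)
    then show False using h block_in[OF a] unfolding S2set_def by auto
  qed
  ultimately show "Pv g (2*int a+1) \<and> \<not> Pv g (2*int a+2)" by blast
next
  assume p: "Pv g (2*int a+1) \<and> \<not> Pv g (2*int a+2)"
  have "vert k ((2*int a+1)*HH k j) 0 \<in> (SS k j g)" using p vert_cH by simp
  moreover have "vert k ((2*int a+1)*HH k j) 0 \<notin> step2_pair k (hh k (Suc j)) (SS k j g) bl"
    if bl: "bl \<in> blocks k (Suc j)" for bl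
  proof
    assume m: "vert k ((2*int a+1)*HH k j) 0 \<in> step2_pair k (hh k (Suc j)) (SS k j g) bl"
    obtain a' b' where ab: "bl = (2*HH k j*int a', 2*HH k j*int b')" "a' < 2^j" "b' < 2^j"
      using blocks_obtain[OF bl] .
    from m have c: "Pv g (2*int a'+1) \<and> Pv g (2*int a'+2)" and
      v: "vert k ((2*int a+1)*HH k j) 0 = vert k ((2*int a'+1)*HH k j) 0 \<or> vert k ((2*int a+1)*HH k j) 0 = vert k ((2*int a'+2)*HH k j) 0"
      unfolding ab(1) s2p[OF ab(3)] opt_def by (auto split: if_splits)
    from v show False
    proof
      assume "vert k ((2*int a+1)*HH k j) 0 = vert k ((2*int a'+1)*HH k j) 0"
      then have "a = a'" using vert_odd_inj[OF a ab(2)] by blast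
      then show False using c p by simp
    next
      assume "vert k ((2*int a+1)*HH k j) 0 = vert k ((2*int a'+2)*HH k j) 0"
      then show False using vert_odd_even by blast
    qed
  qed
  ultimately show "vert k ((2*int a+1)*HH k j) 0 \<in> (S2set k j g)" unfolding S2set_def by blast
qed


lemma xdiv_bound: assumes "0 \<le> x" "x < 2^k" shows "0 \<le> x div HH k j" "x div HH k j < 2^(Suc j)"
proof -
  show "0 \<le> x div HH k j" using assms HH_pos by (simp add: pos_imp_zdiv_nonneg_iff)
  show "x div HH k j < 2^(Suc j)"
  proof (rule ccontr)
    assume "\<not> x div HH k j < 2^(Suc j)"
    then have "2^(Suc j) * HH k j \<le> (x div HH k j) * HH k j" using HH_pos by (intro mult_right_mono) simp_all
    moreover have "(x div HH k j) * HH k j \<le> x" using div_iff_bounds[OF HH_pos] by blast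
    ultimately show False using assms NN_eq by (simp add: mult.commute)
  qed
qed

lemma blk_in: assumes "0 \<le> x" "x < 2^k" shows "(2*HH k j*(x div HH k j div 2), 0) \<in> blocks k (Suc j)"
proof -
  have b: "0 \<le> x div HH k j div 2" "x div HH k j div 2 < 2^j" using xdiv_bound[OF assms] by simp_all
  define a where "a = nat (x div HH k j div 2)"
  have ia: "int a = x div HH k j div 2" using b unfolding a_def by simp
  have "a < 2^j" using b(2) ia by (metis of_nat_less_iff of_nat_numeral of_nat_power)
  from block_in[OF this] show ?thesis unfolding ia .
qed

lemma f2_char:
  assumes bl: "bl \<in> blocks k (Suc j)"
  shows "ed \<in> step2_flip k (hh k (Suc j)) (SS k j g) bl \<longleftrightarrow> (\<exists>x. ed = ((x,0),False) \<and> 0 \<le> x \<and> x < 2^k \<and>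
     bl = (2*HH k j*(x div HH k j div 2), 0) \<and> odd (x div HH k j) \<and> Pv g (x div HH k j) \<and> Pv g (x div HH k j + 1))"
proof -
  obtain a b where ab: "bl = (2*HH k j*int a, 2*HH k j*int b)" "a < 2^j" "b < 2^j"
    using blocks_obtain[OF bl] .
  have ia: "int a < 2^j" using ab(2) by (metis of_nat_less_iff of_nat_numeral of_nat_power)
  have p2: "(2::int)^(Suc j) = 2*2^j" by simp
  have c: "0 \<le> 2*int a+1" "2*int a+1 < 2^(Suc j)" using ia p2 by linarith+
  have f: "step2_flip k (hh k (Suc j)) (SS k j g) bl = opt (b = 0 \<and> Pv g (2*int a+1) \<and> Pv g (2*int a+2)) (rowset k (\<lambda>x. x div HH k j = 2*int a+1))"
    unfolding ab(1) s2f[OF ab(3)] hpath_row[OF c] ..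
  show ?thesis
  proof
    assume "ed \<in> step2_flip k (hh k (Suc j)) (SS k j g) bl"
    then have cond: "b = 0" "Pv g (2*int a+1)" "Pv g (2*int a+2)" and m: "ed \<in> rowset k (\<lambda>x. x div HH k j = 2*int a+1)"
      unfolding f opt_def by (auto split: if_splits)
    from m obtain x where x: "ed = ((x,0),False)" "0 \<le> x" "x < 2^k" "x div HH k j = 2*int a+1"
      unfolding mem_rowset by blast
    have "x div HH k j div 2 = int a" using x(4) by simp
    moreover have "Pv g (x div HH k j + 1)" using cond x(4) by (simp add: add.assoc)
    ultimately show "\<exists>x. ed = ((x,0),False) \<and> 0 \<le> x \<and> x < 2^k \<and>
     bl = (2*HH k j*(x div HH k j div 2), 0) \<and> odd (x div HH k j) \<and> Pv g (x div HH k j) \<and> Pv g (x div HH k j + 1)"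
      using x cond ab(1) by auto
  next
    assume "\<exists>x. ed = ((x,0),False) \<and> 0 \<le> x \<and> x < 2^k \<and>
     bl = (2*HH k j*(x div HH k j div 2), 0) \<and> odd (x div HH k j) \<and> Pv g (x div HH k j) \<and> Pv g (x div HH k j + 1)"
    then obtain x where x: "ed = ((x,0),False)" "0 \<le> x" "x < 2^k" "bl = (2*HH k j*(x div HH k j div 2), 0)"
      "odd (x div HH k j)" "Pv g (x div HH k j)" "Pv g (x div HH k j + 1)" by blast
    from x(4) ab(1) HH_pos have "int b = 0" "int a = x div HH k j div 2" by auto
    then have b0: "b = 0" and xa: "x div HH k j = 2*int a+1" using x(5) by auto
    have "Pv g (2*int a+1)" "Pv g (2*int a+2)" using x(6,7) xa by (simp_all add: add.assoc)
    then show "ed \<in> step2_flip k (hh k (Suc j)) (SS k j g) bl"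
      unfolding f opt_def using b0 x xa by (auto simp: mem_rowset)
  qed
qed

lemma f3_char:
  assumes bl: "bl \<in> blocks k (Suc j)"
  shows "ed \<in> step3_flip k (hh k (Suc j)) (S2set k j g) bl \<longleftrightarrow> (\<exists>x. ed = ((x,0),False) \<and> 0 \<le> x \<and> x < 2^k \<and>
     bl = (2*HH k j*(x div HH k j div 2), 0) \<and> even (x div HH k j) \<and> Pv g (x div HH k j + 1) \<and> \<not> Pv g (x div HH k j + 2))"
proof -
  obtain a b where ab: "bl = (2*HH k j*int a, 2*HH k j*int b)" "a < 2^j" "b < 2^j"
    using blocks_obtain[OF bl] .
  have ia: "int a < 2^j" using ab(2) by (metis of_nat_less_iff of_nat_numeral of_nat_power)
  have p2: "(2::int)^(Suc j) = 2*2^j" by simp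
  have c: "0 \<le> 2*int a" "2*int a < 2^(Suc j)" using ia p2 by linarith+
  have f: "step3_flip k (hh k (Suc j)) (S2set k j g) bl = opt (b = 0 \<and> Pv g (2*int a+1) \<and> \<not> Pv g (2*int a+2)) (rowset k (\<lambda>x. x div HH k j = 2*int a))"
    unfolding ab(1) s3f[OF ab(3) S2_sub] hpath_row[OF c] S2mem[OF ab(2)] ..
  show ?thesis
  proof
    assume "ed \<in> step3_flip k (hh k (Suc j)) (S2set k j g) bl"
    then have cond: "b = 0" "Pv g (2*int a+1)" "\<not> Pv g (2*int a+2)" and m: "ed \<in> rowset k (\<lambda>x. x div HH k j = 2*int a)"
      unfolding f opt_def by (auto split: if_splits)
    from m obtain x where x: "ed = ((x,0),False)" "0 \<le> x" "x < 2^k" "x div HH k j = 2*int a"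
      unfolding mem_rowset by blast
    have "x div HH k j div 2 = int a" using x(4) by simp
    moreover have "2*int a+1+1 = 2*int a+2" by simp
    ultimately show "\<exists>x. ed = ((x,0),False) \<and> 0 \<le> x \<and> x < 2^k \<and>
     bl = (2*HH k j*(x div HH k j div 2), 0) \<and> even (x div HH k j) \<and> Pv g (x div HH k j + 1) \<and> \<not> Pv g (x div HH k j + 2)"
      using x cond ab(1) by auto
  next
    assume "\<exists>x. ed = ((x,0),False) \<and> 0 \<le> x \<and> x < 2^k \<and>
     bl = (2*HH k j*(x div HH k j div 2), 0) \<and> even (x div HH k j) \<and> Pv g (x div HH k j + 1) \<and> \<not> Pv g (x div HH k j + 2)"
    then obtain x where x: "ed = ((x,0),False)" "0 \<le> x" "x < 2^k" "bl = (2*HH k j*(x div HH k j div 2), 0)"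
      "even (x div HH k j)" "Pv g (x div HH k j + 1)" "\<not> Pv g (x div HH k j + 2)" by blast
    from x(4) ab(1) HH_pos have "int b = 0" "int a = x div HH k j div 2" by auto
    then have b0: "b = 0" and xa: "x div HH k j = 2*int a" using x(5) by auto
    have "Pv g (2*int a+1)" "\<not> Pv g (2*int a+2)" using x(6,7) xa by simp_all
    then show "ed \<in> step3_flip k (hh k (Suc j)) (S2set k j g) bl"
      unfolding f opt_def using b0 x xa by (auto simp: mem_rowset)
  qed
qed


lemma F2: "xfam (blocks k (Suc j)) (step2_flip k (hh k (Suc j)) (SS k j g)) =
  rowset k (\<lambda>x. odd (x div HH k j) \<and> Pv g (x div HH k j) \<and> Pv g (x div HH k j + 1))"
proof -
  have "xfam (blocks k (Suc j)) (step2_flip k (hh k (Suc j)) (SS k j g)) = (\<Union>bl\<in>blocks k (Suc j). step2_flip k (hh k (Suc j)) (SS k j g) bl)"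
  proof (rule xfam_unique)
    fix ed bl1 bl2 assume "bl1 \<in> blocks k (Suc j)" "bl2 \<in> blocks k (Suc j)"
      "ed \<in> step2_flip k (hh k (Suc j)) (SS k j g) bl1" "ed \<in> step2_flip k (hh k (Suc j)) (SS k j g) bl2"
    then show "bl1 = bl2" using f2_char by fastforce
  qed
  also have "\<dots> = rowset k (\<lambda>x. odd (x div HH k j) \<and> Pv g (x div HH k j) \<and> Pv g (x div HH k j + 1))"
  proof (rule set_eqI)
    fix ed
    show "ed \<in> (\<Union>bl\<in>blocks k (Suc j). step2_flip k (hh k (Suc j)) (SS k j g) bl) \<longleftrightarrow> ed \<in> rowset k (\<lambda>x. odd (x div HH k j) \<and> Pv g (x div HH k j) \<and> Pv g (x div HH k j + 1))"
    proof
      assume "ed \<in> (\<Union>bl\<in>blocks k (Suc j). step2_flip k (hh k (Suc j)) (SS k j g) bl)"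
      then obtain bl where "bl \<in> blocks k (Suc j)" "ed \<in> step2_flip k (hh k (Suc j)) (SS k j g) bl" by blast
      then show "ed \<in> rowset k (\<lambda>x. odd (x div HH k j) \<and> Pv g (x div HH k j) \<and> Pv g (x div HH k j + 1))"
        using f2_char unfolding mem_rowset by blast
    next
      assume "ed \<in> rowset k (\<lambda>x. odd (x div HH k j) \<and> Pv g (x div HH k j) \<and> Pv g (x div HH k j + 1))"
      then obtain x where x: "ed = ((x,0),False)" "0 \<le> x" "x < 2^k" "odd (x div HH k j)" "Pv g (x div HH k j)" "Pv g (x div HH k j + 1)"
        unfolding mem_rowset by blast
      have b: "(2*HH k j*(x div HH k j div 2), 0) \<in> blocks k (Suc j)" using blk_in x(2,3) .
      have "ed \<in> step2_flip k (hh k (Suc j)) (SS k j g) (2*HH k j*(x div HH k j div 2), 0)"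
        unfolding f2_char[OF b] using x by blast
      then show "ed \<in> (\<Union>bl\<in>blocks k (Suc j). step2_flip k (hh k (Suc j)) (SS k j g) bl)" using b by blast
    qed
  qed
  finally show ?thesis .
qed

lemma F3: "xfam (blocks k (Suc j)) (step3_flip k (hh k (Suc j)) (S2set k j g)) =
  rowset k (\<lambda>x. even (x div HH k j) \<and> Pv g (x div HH k j + 1) \<and> \<not> Pv g (x div HH k j + 2))"
proof -
  have "xfam (blocks k (Suc j)) (step3_flip k (hh k (Suc j)) (S2set k j g)) = (\<Union>bl\<in>blocks k (Suc j). step3_flip k (hh k (Suc j)) (S2set k j g) bl)"
  proof (rule xfam_unique)
    fix ed bl1 bl2 assume "bl1 \<in> blocks k (Suc j)" "bl2 \<in> blocks k (Suc j)"
      "ed \<in> step3_flip k (hh k (Suc j)) (S2set k j g) bl1" "ed \<in> step3_flip k (hh k (Suc j)) (S2set k j g) bl2"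
    then show "bl1 = bl2" using f3_char by fastforce
  qed
  also have "\<dots> = rowset k (\<lambda>x. even (x div HH k j) \<and> Pv g (x div HH k j + 1) \<and> \<not> Pv g (x div HH k j + 2))"
  proof (rule set_eqI)
    fix ed
    show "ed \<in> (\<Union>bl\<in>blocks k (Suc j). step3_flip k (hh k (Suc j)) (S2set k j g) bl) \<longleftrightarrow> ed \<in> rowset k (\<lambda>x. even (x div HH k j) \<and> Pv g (x div HH k j + 1) \<and> \<not> Pv g (x div HH k j + 2))"
    proof
      assume "ed \<in> (\<Union>bl\<in>blocks k (Suc j). step3_flip k (hh k (Suc j)) (S2set k j g) bl)"
      then obtain bl where "bl \<in> blocks k (Suc j)" "ed \<in> step3_flip k (hh k (Suc j)) (S2set k j g) bl" by blast
      then show "ed \<in> rowset k (\<lambda>x. even (x div HH k j) \<and> Pv g (x div HH k j + 1) \<and> \<not> Pv g (x div HH k j + 2))"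
        using f3_char unfolding mem_rowset by blast
    next
      assume "ed \<in> rowset k (\<lambda>x. even (x div HH k j) \<and> Pv g (x div HH k j + 1) \<and> \<not> Pv g (x div HH k j + 2))"
      then obtain x where x: "ed = ((x,0),False)" "0 \<le> x" "x < 2^k" "even (x div HH k j)" "Pv g (x div HH k j + 1)" "\<not> Pv g (x div HH k j + 2)"
        unfolding mem_rowset by blast
      have b: "(2*HH k j*(x div HH k j div 2), 0) \<in> blocks k (Suc j)" using blk_in x(2,3) .
      have "ed \<in> step3_flip k (hh k (Suc j)) (S2set k j g) (2*HH k j*(x div HH k j div 2), 0)"
        unfolding f3_char[OF b] using x by blast
      then show "ed \<in> (\<Union>bl\<in>blocks k (Suc j). step3_flip k (hh k (Suc j)) (S2set k j g) bl)" using b by blast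
    qed
  qed
  finally show ?thesis .
qed

lemma reduce_SS: "reduce k (Suc j) (SS k j g) = rowset k (\<lambda>x.
   (odd (x div HH k j) \<and> Pv g (x div HH k j) \<and> Pv g (x div HH k j + 1)) \<noteq> (even (x div HH k j) \<and> Pv g (x div HH k j + 1) \<and> \<not> Pv g (x div HH k j + 2)))"
proof -
  have e0: "xfam (blocks k (Suc j)) (step1_flip k (hh k (Suc j)) (SS k j g)) = {}"
    by (rule xfam_empty) (metis blocks_obtain s1f)
  have e1: "(SS k j g) - (\<Union>bl\<in>blocks k (Suc j). step1_pair k (hh k (Suc j)) (SS k j g) bl) = (SS k j g)"
  proof -
    have "\<And>bl. bl \<in> blocks k (Suc j) \<Longrightarrow> step1_pair k (hh k (Suc j)) (SS k j g) bl = {}"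
      by (metis blocks_obtain s1p)
    then show ?thesis by simp
  qed
  show ?thesis
    unfolding reduce_def Let_def e0 e1 S2set_def[symmetric] F2 F3 symd_empty symd_rowset ..
qed

end


lemma rowset_cong: "(\<And>x. 0 \<le> x \<Longrightarrow> x < 2^k \<Longrightarrow> P x = Q x) \<Longrightarrow> rowset k P = rowset k Q"
  unfolding rowset_def by (intro Collect_cong) blast

lemma rowv_cong: "(\<And>x. 0 \<le> x \<Longrightarrow> x < 2^k \<Longrightarrow> P x = Q x) \<Longrightarrow> rowv k P = rowv k Q"
  unfolding rowv_def by (intro Collect_cong) blast

lemma symd_rowv: "symd (rowv k P) (rowv k Q) = rowv k (\<lambda>x. P x \<noteq> Q x)"
  unfolding symd_def rowv_def by auto

lemma symd_assoc: "symd e (symd a f) = symd (symd e a) f"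
  unfolding symd_def by blast

lemma mstep_per: assumes "\<And>c. g c = g (c mod 2^(Suc j))"
  shows "mstep g c = mstep g (c mod 2^j)"
proof -
  have h: "(c mod 2^j) mod 2^j = c mod (2::int)^j" by simp
  have r: "g (2*(c mod 2^j) + r) = g (2*c + r)" for r
  proof -
    have "g (2*(c mod 2^j) + r) = g ((2*(c mod 2^j) + r) mod 2^(Suc j))" by (rule assms)
    also have "\<dots> = g ((2*c + r) mod 2^(Suc j))" using modcong2[OF h, of r] by simp
    also have "\<dots> = g (2*c + r)" by (rule assms[symmetric])
    finally show ?thesis .
  qed
  have "g (2*(c mod 2^j)) = g (2*c)" using r[of 0] by simp
  then show ?thesis unfolding mstep_def using r[of 1] r[of 2] by simp
qed

lemma mstep_pointwise:
  assumes H: "(H::int) > 0"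
  shows "(g (x div H) \<noteq> ((odd (x div H) \<and> Pv g (x div H) \<and> Pv g (x div H + 1)) \<noteq>
          (even (x div H) \<and> Pv g (x div H + 1) \<and> \<not> Pv g (x div H + 2)))) = mstep g (x div (2*H))"
proof -
  define c where "c = x div H"
  have d: "x div (2*H) = c div 2" unfolding c_def using H
    using zdiv_zmult2_eq[of 2 x H] by (simp add: mult.commute)
  show ?thesis
  proof (cases "even c")
    case True
    then have "2*(c div 2) = c" by simp
    then have m: "mstep g (c div 2) = maj (g c) (g (c+1)) (g (c+2))" unfolding mstep_def by simp
    have e: "c + 2 - 1 = c + 1" by simp
    show ?thesis unfolding d c_def[symmetric] m Pv_def e using True
      by (simp add: maj_def) blast
  next
    case False
    then have "2*(c div 2) = c - 1" by presburger
    then have "2*(c div 2) + 1 = c" "2*(c div 2) + 2 = c + 1" by simp_all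
    then have m: "mstep g (c div 2) = maj (g (c - 1)) (g c) (g (c+1))" unfolding mstep_def
      using \<open>2*(c div 2) = c - 1\<close> by (simp add: add.commute)
    have e: "c + 1 - 1 = c" by simp
    show ?thesis unfolding d c_def[symmetric] m Pv_def e using False
      by (simp add: maj_def) blast
  qed
qed

lemma MM_const: "MM j (\<lambda>_. b) = b"
proof (induction j)
  case 0 then show ?case by simp
next
  case (Suc j)
  have "mstep (\<lambda>_. b) = (\<lambda>_. b)" unfolding mstep_def maj_def by auto
  then show ?case using Suc by simp
qed

lemma const_from_Pv: assumes "\<And>c. \<not> Pv g c" shows "g c = g 0"
proof -
  have s: "g i = g (i - 1)" for i using assms[of i] by (simp add: Pv_def)
  show "g c = g 0"
  proof (induction c rule: int_induct[where k=0])
    case base then show ?case by simp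
  next
    case (step1 i) then show ?case using s[of "i+1"] by simp
  next
    case (step2 i) then show ?case using s[of i] by simp
  qed
qed

lemma pow_step: "Suc j \<le> k \<Longrightarrow> 2 * HH k j = (2::int)^(k - j)"
proof -
  assume "Suc j \<le> k"
  then have "k - j = Suc (k - Suc j)" by simp
  then show ?thesis unfolding HH_def by simp
qed

lemma decode_main:
  assumes "j \<le> k" "k \<ge> 1" "\<And>c. g c = g (c mod 2^j)"
    "symd e acc = rowset k (\<lambda>x. g (x div 2^(k-j)))"
  shows "symd e (decode_from k j (syndrome k (rowset k (\<lambda>x. g (x div 2^(k-j))))) acc) = rowset k (\<lambda>x. MM j g)"
  using assms
proof (induction j arbitrary: g acc)
  case 0
  have "decode_from k 0 (syndrome k (rowset k (\<lambda>x. g (x div 2^(k-0))))) acc = acc" by simp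
  moreover have "rowset k (\<lambda>x. g (x div 2^(k-0))) = rowset k (\<lambda>x. MM 0 g)"
    by (rule rowset_cong) simp
  ultimately show ?case using 0 by simp
next
  case (Suc j)
  have jk: "Suc j \<le> k" and per: "\<And>c. g c = g (c mod 2^(Suc j))" using Suc.prems by auto
  have HHe: "HH k j = (2::int)^(k - Suc j)" unfolding HH_def ..
  have Phie: "(\<lambda>x. g (x div 2^(k - Suc j))) = Phi k j g"
    unfolding Phi_def HH_def ..
  have SSe: "syndrome k (rowset k (\<lambda>x. g (x div 2^(k - Suc j)))) = SS k j g"
    unfolding SS_def Phie ..
  show ?case
  proof (cases "SS k j g = {}")
    case True
    have "\<not> Pv g c" for c using vert_cH[where k=k and j=j and g=g and c=c and y=0] jk per True by simp
    then have gc0: "\<And>c. g c = g 0" by (rule const_from_Pv)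
    then have gc: "g = (\<lambda>_. g 0)" by (rule ext)
    have mm: "MM (Suc j) g = g 0"
    proof -
      have "MM (Suc j) g = MM (Suc j) (\<lambda>_. g 0)" by (rule arg_cong[where f="MM (Suc j)"], rule gc)
      then show ?thesis using MM_const by simp
    qed
    have "symd e (decode_from k (Suc j) (SS k j g) acc) = symd e acc" using True by simp
    also have "\<dots> = rowset k (\<lambda>x. g (x div 2^(k - Suc j)))" using Suc.prems by simp
    also have "\<dots> = rowset k (\<lambda>x. MM (Suc j) g)"
      by (rule rowset_cong) (unfold mm, rule gc0)
    finally show ?thesis unfolding SSe .
  next
    case False
    let ?f = "reduce k (Suc j) (SS k j g)"
    let ?g' = "mstep g"
    have fe: "?f = rowset k (\<lambda>x.
       (odd (x div HH k j) \<and> Pv g (x div HH k j) \<and> Pv g (x div HH k j + 1)) \<noteq>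
       (even (x div HH k j) \<and> Pv g (x div HH k j + 1) \<and> \<not> Pv g (x div HH k j + 2)))"
      using reduce_SS[where k=k and j=j and g=g, OF jk per] .
    have new: "symd (rowset k (Phi k j g)) ?f = rowset k (\<lambda>x. ?g' (x div 2^(k-j)))"
      unfolding fe symd_rowset
      by (rule rowset_cong) (use mstep_pointwise[OF HH_pos[where k=k and j=j and g=g, OF jk per], of g] pow_step[OF jk] in \<open>simp add: Phi_def\<close>)
    have acc': "symd e (symd acc ?f) = rowset k (\<lambda>x. ?g' (x div 2^(k-j)))"
      unfolding symd_assoc using Suc.prems(4) new Phie by simp
    have S': "symd (SS k j g) (syndrome k ?f) = syndrome k (rowset k (\<lambda>x. ?g' (x div 2^(k-j))))"
    proof -
      have "symd (SS k j g) (syndrome k ?f) = symd (syndrome k (rowset k (Phi k j g))) (syndrome k ?f)"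
        unfolding SS_def ..
      also have "\<dots> = syndrome k (symd (rowset k (Phi k j g)) ?f)"
        unfolding fe symd_rowset syndrome_rowset[OF Suc.prems(2)] symd_rowv
        by (rule rowv_cong) auto
      finally show ?thesis unfolding new .
    qed
    have per': "\<And>c. ?g' c = ?g' (c mod 2^j)" using mstep_per[where g=g and j=j, OF per] .
    have IH: "symd e (decode_from k j (syndrome k (rowset k (\<lambda>x. ?g' (x div 2^(k-j))))) (symd acc ?f)) = rowset k (\<lambda>x. MM j ?g')"
      using Suc.IH[of ?g' "symd acc ?f"] jk Suc.prems(2) per' acc' by simp
    have "decode_from k (Suc j) (SS k j g) acc = decode_from k j (symd (SS k j g) (syndrome k ?f)) (symd acc ?f)"
      using False by (simp add: Let_def)
    then show ?thesis unfolding SSe S' using IH by simp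
  qed
qed


lemma verts_fin: "finite (verts k)"
proof -
  have "verts k \<subseteq> {0..<2^k} \<times> {0..<2^k}" unfolding verts_def by auto
  then show ?thesis by (rule finite_subset) simp
qed

lemma edges_fin: "finite (edges k)"
proof -
  have "edges k = verts k \<times> UNIV" unfolding edges_def by auto
  then show ?thesis using verts_fin by simp
qed

definition ZZ :: "edge set" where "ZZ = {ed. \<exists>y. ed = ((0,y),False)}"

lemma card_symd_parity:
  assumes "finite A" "finite B"
  shows "even (card (symd A B)) \<longleftrightarrow> (even (card A) \<longleftrightarrow> even (card B))"
proof -
  have "symd A B = (A - B) \<union> (B - A)" unfolding symd_def ..
  then have "card (symd A B) = card (A - B) + card (B - A)"
    using assms by (simp add: card_Un_disjoint Diff_Int_distrib2 disjoint_iff)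
  moreover have "card (A - B) = card A - card (A \<inter> B)" using assms by (simp add: card_Diff_subset_Int)
  moreover have "card (B - A) = card B - card (A \<inter> B)" using assms
    by (simp add: card_Diff_subset_Int Int_commute)
  moreover have "card (A \<inter> B) \<le> card A" "card (A \<inter> B) \<le> card B" using assms
    by (simp_all add: card_mono)
  ultimately show ?thesis by presburger
qed

lemma face_Z_even:
  assumes k: "k \<ge> 1" and v: "v \<in> verts k"
  shows "even (card (face k v \<inter> edges k \<inter> ZZ))"
proof -
  obtain x y where xy: "v = (x,y)" "0 \<le> x" "x < 2^k" "0 \<le> y" "y < 2^k" using v unfolding verts_def by auto
  have N2: "(2::int)^k \<ge> 2" using N2[OF k] .
  show ?thesis
  proof (cases "x = 0")
    case True
    have y1: "(y+1) mod 2^k \<noteq> y" using mod_pred_iff[OF N2 xy(4,5) xy(4,5)] pred_mod[OF N2 xy(4,5)] N2 by auto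
    have "face k v \<inter> edges k \<inter> ZZ = {((0,y),False), ((0,(y+1) mod 2^k),False)}"
      unfolding xy(1) face_def vert_def edges_def ZZ_def verts_def using True xy by auto
    then show ?thesis using y1 by simp
  next
    case False
    have "face k v \<inter> edges k \<inter> ZZ = {}"
      unfolding xy(1) face_def vert_def ZZ_def using False xy by auto
    then show ?thesis by simp
  qed
qed

lemma faces_even:
  assumes k: "k \<ge> 1"
  shows "finite F \<Longrightarrow> F \<subseteq> verts k \<Longrightarrow> even (card ({ed \<in> edges k. odd (card {v\<in>F. ed \<in> face k v})} \<inter> ZZ))"
proof (induction F rule: finite_induct)
  case empty
  then show ?case by simp
next
  case (insert w F)
  let ?c = "{ed \<in> edges k. odd (card {v\<in>F. ed \<in> face k v})}"
  have eq: "{ed \<in> edges k. odd (card {v\<in>insert w F. ed \<in> face k v})} = symd ?c (face k w \<inter> edges k)"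
  proof (rule set_eqI)
    fix ed
    have "card {v\<in>insert w F. ed \<in> face k v} = (if ed \<in> face k w then Suc (card {v\<in>F. ed \<in> face k v}) else card {v\<in>F. ed \<in> face k v})"
    proof (cases "ed \<in> face k w")
      case True
      then have "{v\<in>insert w F. ed \<in> face k v} = insert w {v\<in>F. ed \<in> face k v}" by auto
      then show ?thesis using True insert.hyps by simp
    next
      case False
      then have "{v\<in>insert w F. ed \<in> face k v} = {v\<in>F. ed \<in> face k v}" by auto
      then show ?thesis using False by simp
    qed
    then show "ed \<in> {ed \<in> edges k. odd (card {v\<in>insert w F. ed \<in> face k v})} \<longleftrightarrow> ed \<in> symd ?c (face k w \<inter> edges k)"
      unfolding symd_def by auto
  qed
  have fin: "finite (?c \<inter> ZZ)" "finite (face k w \<inter> edges k \<inter> ZZ)" using edges_fin by auto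
  have "symd ?c (face k w \<inter> edges k) \<inter> ZZ = symd (?c \<inter> ZZ) (face k w \<inter> edges k \<inter> ZZ)"
    unfolding symd_def by blast
  then show ?case unfolding eq using card_symd_parity[OF fin] insert.IH insert.prems face_Z_even[OF k] by auto
qed

lemma full_row_not_faces:
  assumes k: "k \<ge> 1"
  shows "\<not> sum_of_faces k (rowset k (\<lambda>_. True))"
proof
  assume "sum_of_faces k (rowset k (\<lambda>_. True))"
  then obtain F where F: "F \<subseteq> verts k" "rowset k (\<lambda>_. True) = {ed \<in> edges k. odd (card {v\<in>F. ed \<in> face k v})}"
    unfolding sum_of_faces_def by blast
  have "finite F" using F(1) verts_fin finite_subset by blast
  then have "even (card (rowset k (\<lambda>_. True) \<inter> ZZ))" using faces_even[OF k] F by simp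
  moreover have "rowset k (\<lambda>_. True) \<inter> ZZ = {((0,0),False)}"
    unfolding rowset_def ZZ_def by auto
  ultimately show False by simp
qed


lemma card_pairset: "finite X \<Longrightarrow> card (pairset X) \<le> 2 * card X"
proof -
  assume f: "finite X"
  have "card (pairset X) \<le> (\<Sum>x\<in>X. card {x, x+1})" unfolding pairset_def by (rule card_UN_le[OF f])
  also have "\<dots> = card X * 2" by simp
  finally show ?thesis by simp
qed

lemma card_run3set: "finite X \<Longrightarrow> card (run3set X) \<le> 3 * card X"
proof -
  assume f: "finite X"
  have "card (run3set X) \<le> (\<Sum>x\<in>X. card {x, x+1, x+2})" unfolding run3set_def by (rule card_UN_le[OF f])
  also have "\<dots> = card X * 3" by simp
  finally show ?thesis by simp
qed

lemma win_exists: "k \<ge> 1 \<Longrightarrow> \<exists>P. finite P \<and> card P \<le> u k \<and> MM k (memb k P)"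
proof -
  assume k: "k \<ge> 1"
  consider "k = 1" | m where "k = 2*m+2" | m where "k = 2*m+3"
  proof (cases "even k")
    case True
    then obtain n where "k = 2*n" by blast
    then have "k = 2*(n-1)+2" using k by simp
    then show ?thesis using that by blast
  next
    case False
    then obtain n where n: "k = 2*n+1" using oddE by blast
    show ?thesis
    proof (cases "n = 0")
      case True then show ?thesis using that n by simp
    next
      case False
      then have "k = 2*(n-1)+3" using n by simp
      then show ?thesis using that by blast
    qed
  qed
  then show ?thesis
  proof cases
    case 1
    then show ?thesis using win_one by (intro exI[of _ "{0}"]) simp
  next
    case (2 m)
    have "card (pairset (AA m)) \<le> 2 * 2^m" using card_pairset[OF AA_fin, of m] AA_card[of m] by linarith
    then have "card (pairset (AA m)) \<le> u k" unfolding 2 u_even by simp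
    moreover have "finite (pairset (AA m))" unfolding pairset_def using AA_fin by simp
    ultimately show ?thesis using win_even[of m] unfolding 2 by blast
  next
    case (3 m)
    have fb: "finite (BB m)" unfolding BB_def using AA_fin by simp
    have "card (BB m) \<le> 2^m" unfolding BB_def using card_image_le[OF AA_fin, of _ m] AA_card[of m] le_trans by blast
    then have "card (run3set (BB m)) \<le> 3 * 2^m" using card_run3set[OF fb] by linarith
    then have "card (run3set (BB m)) \<le> u k" unfolding 3 u_odd by simp
    moreover have "finite (run3set (BB m))" unfolding run3set_def using fb by simp
    ultimately show ?thesis using win_odd[of m] unfolding 3 by blast
  qed
qed

theorem proposition3:
  fixes k :: nat
  assumes "k \<ge> 1"
  shows "omega k \<le> u k - 1"
proof -
  obtain P where P: "finite P" "card P \<le> u k" "MM k (memb k P)" using win_exists[OF assms] by blast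
  define g where "g = memb k P"
  have per: "\<And>c. g c = g (c mod 2^k)" unfolding g_def memb_def by simp
  define e where "e = rowset k (\<lambda>x. g (x div 2^(k-k)))"
  have dm: "symd e (decode_from k k (syndrome k e) {}) = rowset k (\<lambda>x. MM k g)"
    unfolding e_def by (rule decode_main) (use assms per in \<open>simp_all add: symd_empty\<close>)
  have full: "rowset k (\<lambda>x. MM k g) = rowset k (\<lambda>_. True)" using P(3) unfolding g_def by simp
  have bad: "\<not> decoded_correctly k e"
    unfolding decoded_correctly_def decoder_def dm full using full_row_not_faces[OF assms] .
  have esub: "e \<subseteq> edges k" unfolding e_def rowset_def edges_def verts_def by auto
  have "e \<subseteq> (\<lambda>p. ((p mod 2^k, 0::int), False)) ` P"
  proof
    fix ed assume "ed \<in> e"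
    then obtain x where x: "ed = ((x,0),False)" "0 \<le> x" "x < 2^k" "memb k P x"
      unfolding e_def mem_rowset g_def by auto
    then obtain p where "p \<in> P" "x mod 2^k = p mod 2^k" unfolding memb_def by blast
    then show "ed \<in> (\<lambda>p. ((p mod 2^k, 0::int), False)) ` P" using x by force
  qed
  then have "card e \<le> card ((\<lambda>p. ((p mod 2^k, 0::int), False)) ` P)" using P(1) by (meson card_mono finite_imageI)
  also have "\<dots> \<le> card P" using P(1) by (rule card_image_le)
  finally have ce: "card e \<le> u k" using P(2) by simp
  define Q where "Q = (\<lambda>w. \<forall>e. e \<subseteq> edges k \<and> card e \<le> w \<longrightarrow> decoded_correctly k e)"
  have Q0: "Q 0"
    unfolding Q_def
  proof (intro allI impI)
    fix e' assume h: "e' \<subseteq> edges k \<and> card e' \<le> 0"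
    then have "finite e'" using edges_fin finite_subset by blast
    then have e0: "e' = {}" using h by simp
    have s0: "syndrome k {} = {}" unfolding syndrome_def by simp
    obtain k' where kk: "k = Suc k'" using assms by (cases k) auto
    have "decoder k {} = {}" unfolding decoder_def using s0 kk by simp
    moreover have "sum_of_faces k {}" unfolding sum_of_faces_def by (intro exI[of _ "{}"]) simp
    ultimately show "decoded_correctly k e'" unfolding decoded_correctly_def e0 symd_def by simp
  qed
  have Qb: "\<forall>y. Q y \<longrightarrow> y \<le> u k - 1"
  proof (intro allI impI)
    fix y assume "Q y"
    show "y \<le> u k - 1"
    proof (rule ccontr)
      assume "\<not> y \<le> u k - 1"
      then have "card e \<le> y" using ce by linarith
      then show False using \<open>Q y\<close> esub bad unfolding Q_def by blast
    qed
  qed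
  have "Q (Greatest Q)" using GreatestI_nat[of Q 0 "u k - 1"] Q0 Qb by blast
  then have "Greatest Q \<le> u k - 1" using Qb by blast
  moreover have "omega k = Greatest Q" unfolding omega_def Q_def ..
  ultimately show ?thesis by simp
qed


end
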